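(* Let $\mathbb S=\bigwedge(\bar\theta_1,\bar\theta_2)$ be the simple $\mathcal C$-module, on which $\bar\theta_a$ acts by (left exterior) multiplication and $\theta_a$ acts as the odd derivation with $\theta_a(\bar\theta_b)=\delta_{ab}$, $\theta_a(1)=0$. Restricted to $\tilde W\subset\mathcal C^\times$, $\mathbb S$ is an irreducible spin representation of $\tilde W$ isomorphic to $U(1,1)$.
   Context: Fix integers $m_1,m_2\ge2$ and set $\zeta_a=e^{i\pi/m_a}$. Let $x_1,\dots,x_4$ be the standard orthonormal basis of $\mathbb R^4$ (complexified to $V=\mathbb C^4$). Let $\mathcal C$ be the complex Clifford algebra generated by $e_1,\dots,e_4$ with $e_je_k+e_ke_j=2\delta_{jk}$, and $\gamma:V\to\mathcal C$ the linear map with $\gamma(x_j)=e_j$. Put $\theta_a=\frac12(e_{2a-1}+ie_{2a})$ and $\bar\theta_a=\frac12(e_{2a-1}-ie_{2a})$ for $a=1,2$. Let $\alpha_p=(\sin(p\pi/m_1),-\cos(p\pi/m_1),0,0)$ ($p=1,\dots,2m_1$), $\beta_q=(0,0,\sin(q\pi/m_2),-\cos(q\pi/m_2))$ ($q=1,\dots,2m_2$), and let $\tilde W\subset\mathcal C^\times$ be the group generated by all $\gamma(\alpha_p),\gamma(\beta_q)$ (the positive double cover of $W=D_{2m_1}\times D_{2m_2}$); it contains $z:=-1$. A representation of $\tilde W$ is spin if $z$ acts by $-1$. Set $\tilde f_1=\gamma(\alpha_{m_1})$, $\tilde f_2=\gamma(\beta_{m_2})$, $\tilde r_1=z\gamma(\alpha_{m_1})\gamma(\alpha_1)$,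 $\tilde r_2=z\gamma(\beta_{m_2})\gamma(\beta_1)$; these together with $z$ generate $\tilde W$. $U(1,1)$ denotes the four-dimensional spin representation of $\tilde W$ with basis $u_1,u_2,u_3,u_4$ on which, in matrix form with respect to this basis, $\tilde f_1=\begin{pmatrix}0&1&0&0\\1&0&0&0\\0&0&0&1\\0&0&1&0\end{pmatrix}$, $\tilde f_2=\begin{pmatrix}0&0&1&0\\0&0&0&-1\\1&0&0&0\\0&-1&0&0\end{pmatrix}$, $\tilde r_1=\mathrm{diag}(\zeta_1,\zeta_1^{-1},\zeta_1,\zeta_1^{-1})$, $\tilde r_2=\mathrm{diag}(\zeta_2,\zeta_2,\zeta_2^{-1},\zeta_2^{-1})$, and $z=-1$. *)

theory Defs
  imports Complex_Main "Jordan_Normal_Form.Matrix"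
begin

text \<open>Elements of the Clifford algebra are coefficient functions on the basis
 e_A (A a subset of {1..4}), e_A = e_a1 e_a2 ... e_ak with a1 < ... < ak.
 Coefficients at sets that are not subsets of {1..4} are irrelevant (and are 0
 for all elements built below).\<close>

type_synonym cliff = "nat set \<Rightarrow> complex"

definition cl_sign :: "nat set \<Rightarrow> nat set \<Rightarrow> complex" where
  "cl_sign A B = (-1) ^ card {(a,b). a \<in> A \<and> b \<in> B \<and> b < a}"

definition cmul :: "cliff \<Rightarrow> cliff \<Rightarrow> cliff" where
  "cmul x y = (\<lambda>C. \<Sum>A\<in>Pow {1..4::nat}. \<Sum>B\<in>Pow {1..4::nat}.
      (if (A - B) \<union> (B - A) = C then cl_sign A B * x A * y B else 0))"

definition cone :: cliff where
  "cone = (\<lambda>A. if A = {} then 1 else 0)"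

definition cneg :: "cliff \<Rightarrow> cliff" where
  "cneg x = (\<lambda>A. - x A)"

text \<open>gamma : V = C^4 \<rightarrow> C, x_j \<mapsto> e_j (vectors are functions on {1..4}).\<close>
definition gamma :: "(nat \<Rightarrow> complex) \<Rightarrow> cliff" where
  "gamma v = (\<lambda>A. if A \<subseteq> {1..4} \<and> card A = 1 then v (the_elem A) else 0)"

definition alpha :: "nat \<Rightarrow> nat \<Rightarrow> nat \<Rightarrow> complex" where
  "alpha m1 p = (\<lambda>j. if j = 1 then complex_of_real (sin (real p * pi / real m1))
                 else if j = 2 then complex_of_real (- cos (real p * pi / real m1)) else 0)"

definition beta :: "nat \<Rightarrow> nat \<Rightarrow> nat \<Rightarrow> complex" where
  "beta m2 q = (\<lambda>j. if j = 3 then complex_of_real (sin (real q * pi / real m2))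
                 else if j = 4 then complex_of_real (- cos (real q * pi / real m2)) else 0)"

definition Wgens :: "nat \<Rightarrow> nat \<Rightarrow> cliff set" where
  "Wgens m1 m2 = {gamma (alpha m1 p) | p. 1 \<le> p \<and> p \<le> 2 * m1}
               \<union> {gamma (beta m2 q) | q. 1 \<le> q \<and> q \<le> 2 * m2}"

text \<open>The subgroup of C^\<times> generated by the gamma(alpha_p), gamma(beta_q).
  Each generator is an involution (unit vectors square to 1), so the generated
  group equals the generated monoid.\<close>
inductive_set Wt :: "nat \<Rightarrow> nat \<Rightarrow> cliff set" for m1 m2 where
  Wt_one: "cone \<in> Wt m1 m2"
| Wt_mul: "g \<in> Wgens m1 m2 \<Longrightarrow> x \<in> Wt m1 m2 \<Longrightarrow> cmul g x \<in> Wt m1 m2"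

definition cz :: cliff where "cz = cneg cone"

definition tf1 :: "nat \<Rightarrow> cliff" where "tf1 m1 = gamma (alpha m1 m1)"
definition tf2 :: "nat \<Rightarrow> cliff" where "tf2 m2 = gamma (beta m2 m2)"
definition tr1 :: "nat \<Rightarrow> cliff" where
  "tr1 m1 = cmul cz (cmul (gamma (alpha m1 m1)) (gamma (alpha m1 1)))"
definition tr2 :: "nat \<Rightarrow> cliff" where
  "tr2 m2 = cmul cz (cmul (gamma (beta m2 m2)) (gamma (beta m2 1)))"

text \<open>Basis of S indexed by 0..3: index i corresponds to the subset
  sub i of {1,2} (bit 0 \<leftrightarrow> 1, bit 1 \<leftrightarrow> 2), i.e. 0 = 1, 1 = thetabar_1,
  2 = thetabar_2, 3 = thetabar_1 thetabar_2.\<close>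
definition sub :: "nat \<Rightarrow> nat set" where
  "sub i = {a \<in> {1,2}. odd (i div 2 ^ (a - 1))}"

definition thetabar_mat :: "nat \<Rightarrow> complex mat" where
  "thetabar_mat a = mat 4 4 (\<lambda>(i,j). if a \<notin> sub j \<and> sub i = insert a (sub j)
      then (-1) ^ card {b \<in> sub j. b < a} else 0)"

definition theta_mat :: "nat \<Rightarrow> complex mat" where
  "theta_mat a = mat 4 4 (\<lambda>(i,j). if a \<in> sub j \<and> sub i = sub j - {a}
      then (-1) ^ card {b \<in> sub j. b < a} else 0)"

text \<open>Action of e_j: e_(2a-1) = theta_a + thetabar_a, e_(2a) = -i (theta_a - thetabar_a).\<close>
definition e_mat :: "nat \<Rightarrow> complex mat" where
  "e_mat j = (if odd j then theta_mat ((j + 1) div 2) + thetabar_mat ((j + 1) div 2)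
              else (- \<i>) \<cdot>\<^sub>m (theta_mat (j div 2) - thetabar_mat (j div 2)))"

definition eA_mat :: "nat set \<Rightarrow> complex mat" where
  "eA_mat A = foldr (\<lambda>j M. e_mat j * M) (sorted_list_of_set A) (1\<^sub>m 4)"

definition rhoS :: "cliff \<Rightarrow> complex mat" where
  "rhoS x = mat 4 4 (\<lambda>(i,j). \<Sum>A\<in>Pow {1..4::nat}. x A * (eA_mat A $$ (i,j)))"

definition zeta :: "nat \<Rightarrow> complex" where "zeta m = cis (pi / real m)"

definition U_f1 :: "complex mat" where
  "U_f1 = mat_of_rows_list 4 [[0,1,0,0],[1,0,0,0],[0,0,0,1],[0,0,1,0]]"
definition U_f2 :: "complex mat" where
  "U_f2 = mat_of_rows_list 4 [[0,0,1,0],[0,0,0,-1],[1,0,0,0],[0,-1,0,0]]"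
definition U_r1 :: "nat \<Rightarrow> complex mat" where
  "U_r1 m1 = mat_of_rows_list 4 [[zeta m1,0,0,0],[0,inverse (zeta m1),0,0],
                                  [0,0,zeta m1,0],[0,0,0,inverse (zeta m1)]]"
definition U_r2 :: "nat \<Rightarrow> complex mat" where
  "U_r2 m2 = mat_of_rows_list 4 [[zeta m2,0,0,0],[0,zeta m2,0,0],
                                  [0,0,inverse (zeta m2),0],[0,0,0,inverse (zeta m2)]]"
definition U_z :: "complex mat" where "U_z = - 1\<^sub>m 4"

definition irreducible_on :: "complex mat set \<Rightarrow> bool" where
  "irreducible_on G \<longleftrightarrow> (\<forall>V. V \<subseteq> carrier_vec 4 \<and> 0\<^sub>v 4 \<in> V
      \<and> (\<forall>v\<in>V. \<forall>w\<in>V. v + w \<in> V) \<and> (\<forall>c. \<forall>v\<in>V. c \<cdot>\<^sub>v v \<in> V)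
      \<and> (\<forall>M\<in>G. \<forall>v\<in>V. M *\<^sub>v v \<in> V)
      \<longrightarrow> V = {0\<^sub>v 4} \<or> V = carrier_vec 4)"

end

theory Submission
  imports Defs
begin
lemma sub_vals: "sub 0 = {}" "sub 1 = {1}" "sub 2 = {2}" "sub 3 = {1,2}"
  by (auto simp: sub_def)

lemma all4: "(\<forall>i<(4::nat). P i) = (P 0 \<and> P 1 \<and> P 2 \<and> P 3)"
  by (auto simp: less_Suc_eq numeral_eq_Suc)

lemma filt: "{b \<in> insert x A. P b} = (if P x then insert x {b\<in>A. P b} else {b\<in>A. P b})"
  "{b \<in> {}. P b} = {}" by auto

lemma mat_cong4: "(\<forall>i<4. \<forall>j<4. f (i,j) = g (i,j)) \<Longrightarrow> mat 4 4 f = mat 4 4 g"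
  by (rule eq_matI) auto

lemma mat_eq4: "A \<in> carrier_mat 4 4 \<Longrightarrow> B \<in> carrier_mat 4 4 \<Longrightarrow>
   (\<forall>i<4. \<forall>j<4. A $$ (i,j) = B $$ (i,j)) \<Longrightarrow> A = B"
  by (rule eq_matI) auto

definition M4 :: "complex list list \<Rightarrow> complex mat" where
  "M4 L = mat 4 4 (\<lambda>(i,j). L ! i ! j)"

lemma M4_carrier[simp]: "M4 L \<in> carrier_mat 4 4" by (simp add: M4_def)
lemma M4_dims[simp]: "dim_row (M4 L) = 4" "dim_col (M4 L) = 4" by (simp_all add: M4_def)
lemma M4_index[simp]: "i < 4 \<Longrightarrow> j < 4 \<Longrightarrow> M4 L $$ (i,j) = L ! i ! j" by (simp add: M4_def)

lemma th1: "theta_mat 1 = M4 [[0,1,0,0],[0,0,0,0],[0,0,0,1],[0,0,0,0]]"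
  unfolding theta_mat_def M4_def
  by (rule mat_cong4, unfold all4, simp only: prod.case sub_vals filt, simp add: insert_Diff_if insert_commute doubleton_eq_iff)
lemma th2: "theta_mat 2 = M4 [[0,0,1,0],[0,0,0,-1],[0,0,0,0],[0,0,0,0]]"
  unfolding theta_mat_def M4_def
  by (rule mat_cong4, unfold all4, simp only: prod.case sub_vals filt, simp add: insert_Diff_if insert_commute doubleton_eq_iff)
lemma tb1: "thetabar_mat 1 = M4 [[0,0,0,0],[1,0,0,0],[0,0,0,0],[0,0,1,0]]"
  unfolding thetabar_mat_def M4_def
  by (rule mat_cong4, unfold all4, simp only: prod.case sub_vals filt, simp add: insert_Diff_if insert_commute doubleton_eq_iff)
lemma tb2: "thetabar_mat 2 = M4 [[0,0,0,0],[0,0,0,0],[1,0,0,0],[0,-1,0,0]]"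
  unfolding thetabar_mat_def M4_def
  by (rule mat_cong4, unfold all4, simp only: prod.case sub_vals filt, simp add: insert_Diff_if insert_commute doubleton_eq_iff)

definition "E1 = M4 [[0,1,0,0],[1,0,0,0],[0,0,0,1],[0,0,1,0]]"
definition "E2 = M4 [[0,-\<i>,0,0],[\<i>,0,0,0],[0,0,0,-\<i>],[0,0,\<i>,0]]"
definition "E3 = M4 [[0,0,1,0],[0,0,0,-1],[1,0,0,0],[0,-1,0,0]]"
definition "E4 = M4 [[0,0,-\<i>,0],[0,0,0,\<i>],[\<i>,0,0,0],[0,-\<i>,0,0]]"

lemmas thS = th1 th2 tb1 tb2 th1[unfolded One_nat_def] tb1[unfolded One_nat_def]
lemma e1: "e_mat 1 = E1"
  by (rule mat_eq4, simp_all add: e_mat_def E1_def thS minus_carrier_mat smult_carrier_mat,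
       unfold all4, simp)
lemma e2: "e_mat 2 = E2"
  by (rule mat_eq4, simp_all add: e_mat_def E2_def thS minus_carrier_mat smult_carrier_mat,
       unfold all4, simp)
lemma e3: "e_mat 3 = E3"
  by (rule mat_eq4, simp_all add: e_mat_def E3_def thS minus_carrier_mat smult_carrier_mat,
       unfold all4, simp)
lemma e4: "e_mat 4 = E4"
  by (rule mat_eq4, simp_all add: e_mat_def E4_def thS minus_carrier_mat smult_carrier_mat,
       unfold all4, simp)

lemmas eS = e1 e2 e3 e4 e1[unfolded One_nat_def]

lemma sum4: "(\<Sum>k\<in>{0..<4::nat}. f k) = f 0 + f 1 + f 2 + f 3"
  by (simp add: numeral_eq_Suc add.assoc)

lemma M4_mult_idx[simp]: "i < 4 \<Longrightarrow> j < 4 \<Longrightarrow> (M4 A * M4 B) $$ (i,j) =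
   A!i!0 * B!0!j + A!i!1 * B!1!j + A!i!2 * B!2!j + A!i!3 * B!3!j"
  by (simp add: scalar_prod_def sum4)

lemma sum_Pow_insert: "a \<notin> A \<Longrightarrow> finite A \<Longrightarrow>
   sum f (Pow (insert a A)) = sum f (Pow A) + sum (\<lambda>B. f (insert a B)) (Pow A)"
proof -
  assume a: "a \<notin> A" "finite A"
  have "Pow (insert a A) = Pow A \<union> insert a ` Pow A" by (rule Pow_insert)
  moreover have "Pow A \<inter> insert a ` Pow A = {}" using a by auto
  moreover have "inj_on (insert a) (Pow A)"
  proof (rule inj_onI)
    fix x y assume "x \<in> Pow A" "y \<in> Pow A" "insert a x = insert a y"
    hence "insert a x - {a} = insert a y - {a}" "a \<notin> x" "a \<notin> y" using a by auto
    thus "x = y" by simp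
  qed
  ultimately show ?thesis using a
    by (simp add: sum.union_disjoint sum.reindex)
qed

lemma Pow14: "{1..4::nat} = {1,2,3,4}" by auto

lemma sum_Pow_single:
  assumes "\<And>A. card A \<noteq> 1 \<Longrightarrow> f A = 0"
  shows "(\<Sum>A\<in>Pow {1..4::nat}. f A) = f {1} + f {2} + f {3} + f {4}"
proof -
  have z: "f A = 0" if "card A \<noteq> 1" for A using assms that by blast
  show ?thesis
    unfolding Pow14
    by (simp add: sum_Pow_insert z insert_commute ac_simps)
qed

lemmas sum_Pow_single' = sum_Pow_single[unfolded One_nat_def]

lemma gamma_zero: "card A \<noteq> 1 \<Longrightarrow> gamma v A = 0" by (simp add: gamma_def)
lemma gamma_single: "k \<in> {1..4} \<Longrightarrow> gamma v {k} = v k" by (simp add: gamma_def)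
lemma gamma_out: "\<not> A \<subseteq> {1..4} \<Longrightarrow> gamma v A = 0" by (simp add: gamma_def)

lemma th_carrier: "theta_mat a \<in> carrier_mat 4 4" "thetabar_mat a \<in> carrier_mat 4 4"
  unfolding theta_mat_def thetabar_mat_def by (rule mat_carrier)+

lemma e_mat_carrier[simp]: "e_mat k \<in> carrier_mat 4 4"
  unfolding e_mat_def
  by (simp add: th_carrier minus_carrier_mat)

lemma eA_single: "eA_mat {k} = e_mat k"
  by (simp add: eA_mat_def right_mult_one_mat[OF e_mat_carrier])

lemma eA_empty: "eA_mat {} = 1\<^sub>m 4"
  by (simp add: eA_mat_def)

lemma rhoS_carrier[simp]: "rhoS x \<in> carrier_mat 4 4" by (simp add: rhoS_def)
lemma rhoS_dims[simp]: "dim_row (rhoS x) = 4" "dim_col (rhoS x) = 4" by (simp_all add: rhoS_def)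

lemma rhoS_idx: "i < 4 \<Longrightarrow> j < 4 \<Longrightarrow> rhoS x $$ (i,j) = (\<Sum>A\<in>Pow {1..4::nat}. x A * (eA_mat A $$ (i,j)))"
  by (simp add: rhoS_def)

lemma rhoS_gamma_idx: "i < 4 \<Longrightarrow> j < 4 \<Longrightarrow> rhoS (gamma v) $$ (i,j) =
   v 1 * E1 $$ (i,j) + v 2 * E2 $$ (i,j) + v 3 * E3 $$ (i,j) + v 4 * E4 $$ (i,j)"
  by (simp add: rhoS_idx sum_Pow_single sum_Pow_single' gamma_zero gamma_single eA_single eS)

definition RG :: "(nat \<Rightarrow> complex) \<Rightarrow> complex mat" where
  "RG v = M4 [[0, v 1 - \<i> * v 2, v 3 - \<i> * v 4, 0],
              [v 1 + \<i> * v 2, 0, 0, - v 3 + \<i> * v 4],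
              [v 3 + \<i> * v 4, 0, 0, v 1 - \<i> * v 2],
              [0, - v 3 - \<i> * v 4, v 1 + \<i> * v 2, 0]]"

lemma rhoS_gamma: "rhoS (gamma v) = RG v"
  apply (rule mat_eq4, simp, simp add: RG_def)
  apply (unfold all4)
  apply (simp add: rhoS_gamma_idx RG_def E1_def E2_def E3_def E4_def)
  done

lemma cl_sign_single: "cl_sign {a} {b} = (if b < a then -1 else 1)"
proof -
  have "{(x,y). x \<in> {a} \<and> y \<in> {b} \<and> y < x} = (if b < a then {(a,b)} else {})" by auto
  thus ?thesis by (simp add: cl_sign_def)
qed

lemma cl_sign_empty: "cl_sign A {} = 1" "cl_sign {} A = 1" by (simp_all add: cl_sign_def)

lemma cmul_cone_right: "cmul x cone = (\<lambda>C. if C \<subseteq> {1..4} then x C else 0)"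
proof
  fix C
  have "cmul x cone C = (\<Sum>A\<in>Pow {1..4::nat}. \<Sum>B\<in>Pow {1..4::nat}.
           (if B = {} then (if A = C then x A else 0) else 0))"
    unfolding cmul_def cone_def
    by (intro sum.cong refl) (auto simp: cl_sign_empty)
  also have "\<dots> = (\<Sum>A\<in>Pow {1..4::nat}. (if A = C then x A else 0))"
    by (simp add: sum.delta)
  also have "\<dots> = (if C \<subseteq> {1..4} then x C else 0)"
    by (simp add: sum.delta')
  finally show "cmul x cone C = (if C \<subseteq> {1..4} then x C else 0)" .
qed

lemma cmul_cz_left: "cmul cz y = (\<lambda>C. if C \<subseteq> {1..4} then - y C else 0)"
proof
  fix C
  have "cmul cz y C = (\<Sum>A\<in>Pow {1..4::nat}. \<Sum>B\<in>Pow {1..4::nat}.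
           (if A = {} then (if B = C then - y B else 0) else 0))"
    unfolding cmul_def cz_def cneg_def cone_def
    by (intro sum.cong refl) (auto simp: cl_sign_empty)
  also have "\<dots> = (\<Sum>A\<in>Pow {1..4::nat}. if A = {} then (\<Sum>B\<in>Pow {1..4::nat}. (if B = C then - y B else 0)) else 0)"
    by (intro sum.cong refl) auto
  also have "\<dots> = (\<Sum>B\<in>Pow {1..4::nat}. (if B = C then - y B else 0))"
    by (subst sum.delta) auto
  also have "\<dots> = (if C \<subseteq> {1..4} then - y C else 0)"
    by (simp add: sum.delta')
  finally show "cmul cz y C = (if C \<subseteq> {1..4} then - y C else 0)" .
qed

lemma gamma_supp: "(\<lambda>C. if C \<subseteq> {1..4} then gamma v C else 0) = gamma v"
  by (auto simp: gamma_out)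

lemma rhoS_neg_restrict: "rhoS (\<lambda>C. if C \<subseteq> {1..4} then - y C else 0) = - rhoS y"
proof (rule mat_eq4)
  show "\<forall>i<4. \<forall>j<4. rhoS (\<lambda>C. if C \<subseteq> {1..4} then - y C else 0) $$ (i, j) = (- rhoS y) $$ (i, j)"
  proof (intro allI impI)
    fix i j :: nat assume ij: "i < 4" "j < 4"
    have "rhoS (\<lambda>C. if C \<subseteq> {1..4} then - y C else 0) $$ (i, j)
       = (\<Sum>A\<in>Pow {1..4::nat}. - (y A * eA_mat A $$ (i,j)))"
      unfolding rhoS_idx[OF ij] by (intro sum.cong refl) simp
    also have "\<dots> = (- rhoS y) $$ (i, j)"
      using ij by (simp add: rhoS_idx sum_negf)
    finally show "rhoS (\<lambda>C. if C \<subseteq> {1..4} then - y C else 0) $$ (i, j) = (- rhoS y) $$ (i, j)" .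
  qed
qed (simp_all add: uminus_carrier_mat)

lemma delta_pow: "A \<subseteq> S \<Longrightarrow> B \<subseteq> S \<Longrightarrow> finite S \<Longrightarrow>
  (\<Sum>C\<in>Pow S. if (A - B) \<union> (B - A) = C then f C else 0) = f ((A - B) \<union> (B - A))"
  by (subst sum.delta') auto

lemma ifmul: "(if P then a else 0) * (e::complex) = (if P then a * e else 0)" by simp

lemma rhoS_cmul_idx: "i < 4 \<Longrightarrow> j < 4 \<Longrightarrow> rhoS (cmul x y) $$ (i,j) =
  (\<Sum>A\<in>Pow {1..4::nat}. \<Sum>B\<in>Pow {1..4::nat}. cl_sign A B * x A * y B * eA_mat ((A - B) \<union> (B - A)) $$ (i,j))"
proof -
  assume ij: "i < 4" "j < 4"
  have "rhoS (cmul x y) $$ (i,j) = (\<Sum>C\<in>Pow {1..4::nat}. \<Sum>A\<in>Pow {1..4::nat}. \<Sum>B\<in>Pow {1..4::nat}.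
      (if (A - B) \<union> (B - A) = C then cl_sign A B * x A * y B * eA_mat C $$ (i,j) else 0))"
  proof -
    have "rhoS (cmul x y) $$ (i,j) = (\<Sum>C\<in>Pow {1..4::nat}. \<Sum>A\<in>Pow {1..4::nat}. \<Sum>B\<in>Pow {1..4::nat}.
      ((if (A - B) \<union> (B - A) = C then cl_sign A B * x A * y B else 0) * eA_mat C $$ (i,j)))"
      unfolding rhoS_idx[OF ij] cmul_def sum_distrib_right by (rule refl)
    also have "\<dots> = (\<Sum>C\<in>Pow {1..4::nat}. \<Sum>A\<in>Pow {1..4::nat}. \<Sum>B\<in>Pow {1..4::nat}.
      (if (A - B) \<union> (B - A) = C then cl_sign A B * x A * y B * eA_mat C $$ (i,j) else 0))"
      by (intro sum.cong refl) (simp only: ifmul)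
    finally show ?thesis .
  qed
  also have "\<dots> = (\<Sum>A\<in>Pow {1..4::nat}. \<Sum>C\<in>Pow {1..4::nat}. \<Sum>B\<in>Pow {1..4::nat}.
      (if (A - B) \<union> (B - A) = C then cl_sign A B * x A * y B * eA_mat C $$ (i,j) else 0))"
    by (rule sum.swap)
  also have "\<dots> = (\<Sum>A\<in>Pow {1..4::nat}. \<Sum>B\<in>Pow {1..4::nat}. \<Sum>C\<in>Pow {1..4::nat}.
      (if (A - B) \<union> (B - A) = C then cl_sign A B * x A * y B * eA_mat C $$ (i,j) else 0))"
    by (rule sum.cong[OF refl], rule sum.swap)
  also have "\<dots> = (\<Sum>A\<in>Pow {1..4::nat}. \<Sum>B\<in>Pow {1..4::nat}. cl_sign A B * x A * y B * eA_mat ((A - B) \<union> (B - A)) $$ (i,j))"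
  proof (rule sum.cong[OF refl], rule sum.cong[OF refl])
    fix A B assume "A \<in> Pow {1..4::nat}" "B \<in> Pow {1..4::nat}"
    thus "(\<Sum>C\<in>Pow {1..4::nat}. if (A - B) \<union> (B - A) = C then cl_sign A B * x A * y B * eA_mat C $$ (i,j) else 0)
       = cl_sign A B * x A * y B * eA_mat ((A - B) \<union> (B - A)) $$ (i,j)"
      by (intro delta_pow[where f = "\<lambda>C. cl_sign A B * x A * y B * eA_mat C $$ (i,j)"]) auto
  qed
  finally show ?thesis .
qed

definition cs :: "nat \<Rightarrow> complex" where "cs m = complex_of_real (cos (pi / real m))"
definition sn :: "nat \<Rightarrow> complex" where "sn m = complex_of_real (sin (pi / real m))"

lemma alpha_m: "m > 0 \<Longrightarrow> alpha m m = (\<lambda>j. if j = 2 then 1 else 0)"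
  by (rule ext) (simp add: alpha_def)
lemma alpha_2m: "m > 0 \<Longrightarrow> alpha m (2*m) = (\<lambda>j. if j = 2 then -1 else 0)"
proof -
  assume m: "m > 0"
  have "real (2*m) * pi / real m = 2 * pi" using m by simp
  thus ?thesis by (intro ext) (simp add: alpha_def)
qed
lemma alpha_1: "alpha m 1 = (\<lambda>j. if j = 1 then sn m else if j = 2 then - cs m else 0)"
  by (rule ext) (simp add: alpha_def sn_def cs_def)
lemma beta_m: "m > 0 \<Longrightarrow> beta m m = (\<lambda>j. if j = 4 then 1 else 0)"
  by (rule ext) (simp add: beta_def)
lemma beta_1: "beta m 1 = (\<lambda>j. if j = 3 then sn m else if j = 4 then - cs m else 0)"
  by (rule ext) (simp add: beta_def sn_def cs_def)

lemma sn_nz: "m \<ge> 2 \<Longrightarrow> sn m \<noteq> 0"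
proof -
  assume m: "m \<ge> 2"
  have "0 < pi / real m" using m by simp
  moreover have "pi / real m < pi" using m pi_gt_zero by (simp add: divide_less_eq)
  ultimately have "sin (pi / real m) > 0" by (intro sin_gt_zero) auto
  thus ?thesis by (simp add: sn_def)
qed

lemma zeta_eq: "zeta m = cs m + \<i> * sn m"
  by (simp add: zeta_def cs_def sn_def complex_eq_iff)
lemma zeta_inv: "inverse (zeta m) = cs m - \<i> * sn m"
  by (simp add: zeta_def cs_def sn_def complex_eq_iff)

lemma cmul_gamma: "cmul (gamma u) (gamma v) C = (\<Sum>a\<in>{1,2,3,4::nat}. \<Sum>b\<in>{1,2,3,4::nat}.
   if ({a} - {b}) \<union> ({b} - {a}) = C then cl_sign {a} {b} * u a * v b else 0)"
  unfolding cmul_def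
  by (simp add: sum_Pow_single sum_Pow_single' gamma_zero gamma_single)

lemma cmul_gamma': "cmul (gamma u) (gamma v) C = (\<Sum>a\<in>{1,2,3,4::nat}. \<Sum>b\<in>{1,2,3,4::nat}.
   cl_sign {a} {b} * u a * v b * (if ({a} - {b}) \<union> ({b} - {a}) = C then 1 else 0))"
  unfolding cmul_gamma by (intro sum.cong refl) simp

lemma rhoS_cmul_gamma_idx: "i < 4 \<Longrightarrow> j < 4 \<Longrightarrow> rhoS (cmul (gamma u) (gamma v)) $$ (i,j) =
  (\<Sum>a\<in>{1,2,3,4::nat}. \<Sum>b\<in>{1,2,3,4::nat}. cl_sign {a} {b} * u a * v b * eA_mat (({a} - {b}) \<union> ({b} - {a})) $$ (i,j))"
  by (simp add: rhoS_cmul_idx sum_Pow_single sum_Pow_single' gamma_zero gamma_single)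

lemma Ecar: "E1 \<in> carrier_mat 4 4" "E2 \<in> carrier_mat 4 4" "E3 \<in> carrier_mat 4 4" "E4 \<in> carrier_mat 4 4"
  by (simp_all add: E1_def E2_def E3_def E4_def)

lemma E12: "E1 * E2 = M4 [[\<i>,0,0,0],[0,-\<i>,0,0],[0,0,\<i>,0],[0,0,0,-\<i>]]"
  apply (rule mat_eq4)
    apply (unfold E1_def E2_def, rule mult_carrier_mat[OF M4_carrier M4_carrier])
   apply simp
  apply (unfold all4 E1_def E2_def)
  apply (simp add: scalar_prod_def sum4)
  done
lemma E34: "E3 * E4 = M4 [[\<i>,0,0,0],[0,\<i>,0,0],[0,0,-\<i>,0],[0,0,0,-\<i>]]"
  apply (rule mat_eq4)
    apply (unfold E3_def E4_def, rule mult_carrier_mat[OF M4_carrier M4_carrier])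
   apply simp
  apply (unfold all4 E3_def E4_def)
  apply (simp add: scalar_prod_def sum4)
  done

lemma eA_12: "eA_mat {1,2} = E1 * E2" "eA_mat {2,1} = E1 * E2"
  "eA_mat {3,4} = E3 * E4" "eA_mat {4,3} = E3 * E4"
  by (simp_all add: eA_mat_def insert_commute eS right_mult_one_mat[OF Ecar(2)] right_mult_one_mat[OF Ecar(4)])

lemma sum1234: "(\<Sum>a\<in>{1,2,3,4::nat}. f a) = f 1 + f 2 + f 3 + f 4" by (simp add: ac_simps)

lemma cmul_gamma_cone: "cmul (gamma v) cone = gamma v"
  unfolding cmul_cone_right by (rule gamma_supp)

lemma gamma_Wt: "gamma v \<in> Wgens m1 m2 \<Longrightarrow> gamma v \<in> Wt m1 m2"
  using Wt_mul[OF _ Wt_one, of "gamma v" m1 m2] by (simp add: cmul_gamma_cone)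

lemma alpha_Wgens: "1 \<le> p \<Longrightarrow> p \<le> 2 * m1 \<Longrightarrow> gamma (alpha m1 p) \<in> Wgens m1 m2"
  unfolding Wgens_def by blast
lemma beta_Wgens: "1 \<le> q \<Longrightarrow> q \<le> 2 * m2 \<Longrightarrow> gamma (beta m2 q) \<in> Wgens m1 m2"
  unfolding Wgens_def by blast

lemma cz_val: "cz A = (if A = {} then -1 else 0)"
  by (simp add: cz_def cneg_def cone_def)

lemma cz_Wt: assumes "m1 > 0" shows "cz \<in> Wt m1 m2"
proof -
  have g2: "gamma (alpha m1 (2*m1)) \<in> Wt m1 m2"
    using assms by (intro gamma_Wt alpha_Wgens) auto
  have "cmul (gamma (alpha m1 m1)) (gamma (alpha m1 (2*m1))) \<in> Wt m1 m2"
    using assms by (intro Wt_mul[OF _ g2] alpha_Wgens) auto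
  moreover have "cmul (gamma (alpha m1 m1)) (gamma (alpha m1 (2*m1))) = cz"
  proof
    fix C
    have "cmul (gamma (alpha m1 m1)) (gamma (alpha m1 (2*m1))) C = - (if {} = C then 1 else 0)"
      unfolding cmul_gamma' alpha_m[OF assms] alpha_2m[OF assms] sum1234
      by (simp add: cl_sign_single)
    thus "cmul (gamma (alpha m1 m1)) (gamma (alpha m1 (2*m1))) C = cz C"
      by (auto simp: cz_val)
  qed
  ultimately show ?thesis by simp
qed

lemma rhoS_cz: "rhoS cz = - 1\<^sub>m 4"
proof (rule mat_eq4)
  show "\<forall>i<4. \<forall>j<4. rhoS cz $$ (i, j) = (- 1\<^sub>m 4) $$ (i, j)"
  proof (intro allI impI)
    fix i j :: nat assume ij: "i < 4" "j < 4"
    have "rhoS cz $$ (i,j) = (\<Sum>A\<in>Pow {1..4::nat}. if A = {} then - (eA_mat {} $$ (i,j)) else 0)"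
      unfolding rhoS_idx[OF ij] by (intro sum.cong refl) (simp add: cz_val)
    also have "\<dots> = - (eA_mat {} $$ (i,j))" by (subst sum.delta) auto
    finally show "rhoS cz $$ (i, j) = (- 1\<^sub>m 4) $$ (i, j)" using ij by (simp add: eA_empty)
  qed
qed (simp_all add: uminus_carrier_mat)

definition R1 :: "nat \<Rightarrow> complex mat" where
  "R1 m = M4 [[cs m + \<i> * sn m,0,0,0],[0, cs m - \<i> * sn m,0,0],[0,0,cs m + \<i> * sn m,0],[0,0,0,cs m - \<i> * sn m]]"
definition R2 :: "nat \<Rightarrow> complex mat" where
  "R2 m = M4 [[cs m + \<i> * sn m,0,0,0],[0, cs m + \<i> * sn m,0,0],[0,0,cs m - \<i> * sn m,0],[0,0,0,cs m - \<i> * sn m]]"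

lemma rhoS_tr1: assumes "m > 0" shows "rhoS (tr1 m) = R1 m"
proof -
  have "rhoS (tr1 m) = - rhoS (cmul (gamma (alpha m m)) (gamma (alpha m 1)))"
    unfolding tr1_def cmul_cz_left by (rule rhoS_neg_restrict)
  also have "\<dots> = R1 m"
  proof (rule mat_eq4)
    show "\<forall>i<4. \<forall>j<4. (- rhoS (cmul (gamma (alpha m m)) (gamma (alpha m 1)))) $$ (i, j) = R1 m $$ (i, j)"
      unfolding all4 alpha_m[OF assms] alpha_1
      by (simp add: rhoS_cmul_gamma_idx sum1234 cl_sign_single eA_12 eA_12[unfolded One_nat_def] eA_empty R1_def E12
         insert_Diff_if algebra_simps)
  qed (simp_all add: uminus_carrier_mat R1_def)
  finally show ?thesis .
qed

lemma rhoS_tr2: assumes "m > 0" shows "rhoS (tr2 m) = R2 m"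
proof -
  have "rhoS (tr2 m) = - rhoS (cmul (gamma (beta m m)) (gamma (beta m 1)))"
    unfolding tr2_def cmul_cz_left by (rule rhoS_neg_restrict)
  also have "\<dots> = R2 m"
  proof (rule mat_eq4)
    show "\<forall>i<4. \<forall>j<4. (- rhoS (cmul (gamma (beta m m)) (gamma (beta m 1)))) $$ (i, j) = R2 m $$ (i, j)"
      unfolding all4 beta_m[OF assms] beta_1
      by (simp add: rhoS_cmul_gamma_idx sum1234 cl_sign_single eA_12 eA_empty R2_def E34
         insert_Diff_if algebra_simps)
  qed (simp_all add: uminus_carrier_mat R2_def)
  finally show ?thesis .
qed

definition vec4 :: "complex \<Rightarrow> complex \<Rightarrow> complex \<Rightarrow> complex \<Rightarrow> complex vec" where
  "vec4 a b c d = vec 4 (\<lambda>i. [a,b,c,d] ! i)"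

lemma vec4_idx[simp]: "vec4 a b c d $ 0 = a" "vec4 a b c d $ 1 = b" "vec4 a b c d $ 2 = c" "vec4 a b c d $ 3 = d"
  "vec4 a b c d $ Suc 0 = b"
  by (simp_all add: vec4_def)
lemma vec4_carrier[simp]: "vec4 a b c d \<in> carrier_vec 4" by (simp add: vec4_def)
lemma vec4_dim[simp]: "dim_vec (vec4 a b c d) = 4" by (simp add: vec4_def)

lemma vec_eq4: "x \<in> carrier_vec 4 \<Longrightarrow> y \<in> carrier_vec 4 \<Longrightarrow> (\<forall>i<4. x $ i = y $ i) \<Longrightarrow> x = y"
  by (rule eq_vecI) auto

lemma vec4_eta: "x \<in> carrier_vec 4 \<Longrightarrow> x = vec4 (x$0) (x$1) (x$2) (x$3)"
  by (rule vec_eq4, simp, simp, unfold all4, simp)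

lemma vec4_eq: "vec4 a b c d = vec4 a' b' c' d' \<longleftrightarrow> a = a' \<and> b = b' \<and> c = c' \<and> d = d'"
  by (metis vec4_idx)

lemma vec4_add: "vec4 a b c d + vec4 a' b' c' d' = vec4 (a+a') (b+b') (c+c') (d+d')"
  by (rule vec_eq4, simp, simp, unfold all4, simp)

lemma vec4_smult: "k \<cdot>\<^sub>v vec4 a b c d = vec4 (k*a) (k*b) (k*c) (k*d)"
  by (rule vec_eq4, simp, simp, unfold all4, simp)

lemma vec4_zero: "0\<^sub>v 4 = vec4 0 0 0 0"
  by (rule vec_eq4, simp, simp, unfold all4, simp)

lemma M4_mult_vec4: "M4 L *\<^sub>v vec4 a b c d = vec4
   (L!0!0*a + L!0!1*b + L!0!2*c + L!0!3*d) (L!1!0*a + L!1!1*b + L!1!2*c + L!1!3*d)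
   (L!2!0*a + L!2!1*b + L!2!2*c + L!2!3*d) (L!3!0*a + L!3!1*b + L!3!2*c + L!3!3*d)"
  by (rule vec_eq4, simp add: mult_mat_vec_carrier[OF M4_carrier vec4_carrier], simp, unfold all4,
      simp add: scalar_prod_def sum4)

lemma irr_core:
  assumes sub: "V \<subseteq> carrier_vec 4" and z: "0\<^sub>v 4 \<in> V"
    and ad: "\<forall>v\<in>V. \<forall>w\<in>V. v + w \<in> V" and sm: "\<forall>k. \<forall>v\<in>V. k \<cdot>\<^sub>v v \<in> V"
    and T1: "\<And>a b c d. vec4 a b c d \<in> V \<Longrightarrow> vec4 b 0 d 0 \<in> V"
    and B1: "\<And>a b c d. vec4 a b c d \<in> V \<Longrightarrow> vec4 0 a 0 c \<in> V"
    and T2: "\<And>a b c d. vec4 a b c d \<in> V \<Longrightarrow> vec4 c (-d) 0 0 \<in> V"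
    and B2: "\<And>a b c d. vec4 a b c d \<in> V \<Longrightarrow> vec4 0 0 a (-b) \<in> V"
  shows "V = {0\<^sub>v 4} \<or> V = carrier_vec 4"
proof (cases "\<forall>x\<in>V. x = 0\<^sub>v 4")
  case True thus ?thesis using z by blast
next
  case False
  then obtain x where xV: "x \<in> V" and xnz: "x \<noteq> 0\<^sub>v 4" by blast
  define a b c d where "a = x$0" "b = x$1" "c = x$2" "d = x$3"
  have xe: "x = vec4 a b c d" using vec4_eta[of x] sub xV a_b_c_d_def by auto
  have xv: "vec4 a b c d \<in> V" using xV xe by simp
  have nz: "a \<noteq> 0 \<or> b \<noteq> 0 \<or> c \<noteq> 0 \<or> d \<noteq> 0" using xnz xe vec4_zero by auto
  have smv: "vec4 (k*a') (k*b') (k*c') (k*d') \<in> V" if "vec4 a' b' c' d' \<in> V" for k a' b' c' d'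
    using sm that vec4_smult by metis
  have adv: "vec4 (a1+a2) (b1+b2) (c1+c2) (d1+d2) \<in> V" if "vec4 a1 b1 c1 d1 \<in> V" "vec4 a2 b2 c2 d2 \<in> V"
    for a1 b1 c1 d1 a2 b2 c2 d2
    using ad that vec4_add by metis
  have "\<exists>t. t \<noteq> 0 \<and> vec4 t 0 0 0 \<in> V"
  proof -
    { assume "d \<noteq> 0"
      have "vec4 (-d) 0 0 0 \<in> V" using T1[OF T2[OF xv]] by simp
      hence ?thesis using \<open>d \<noteq> 0\<close> by (intro exI[of _ "-d"]) simp }
    moreover
    { assume "b \<noteq> 0"
      have "vec4 a b 0 0 \<in> V" using T2[OF B2[OF xv]] by simp
      hence "vec4 b 0 0 0 \<in> V" using T1 by fastforce
      hence ?thesis using \<open>b \<noteq> 0\<close> by blast }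
    moreover
    { assume "c \<noteq> 0"
      have "vec4 c 0 0 0 \<in> V" using T1[OF B1[OF T2[OF xv]]] by simp
      hence ?thesis using \<open>c \<noteq> 0\<close> by blast }
    moreover
    { assume "a \<noteq> 0"
      have "vec4 a b 0 0 \<in> V" using T2[OF B2[OF xv]] by simp
      hence "vec4 a 0 0 0 \<in> V" using T1[OF B1] by fastforce
      hence ?thesis using \<open>a \<noteq> 0\<close> by blast }
    ultimately show ?thesis using nz by blast
  qed
  then obtain t where t: "t \<noteq> 0" "vec4 t 0 0 0 \<in> V" by blast
  have u0: "vec4 1 0 0 0 \<in> V" using smv[OF t(2), of "1/t"] t(1) by simp
  have u1: "vec4 0 1 0 0 \<in> V" using B1[OF u0] by simp
  have u2: "vec4 0 0 1 0 \<in> V" using B2[OF u0] by simp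
  have u3: "vec4 0 0 0 1 \<in> V" using B1[OF u2] by simp
  have "carrier_vec 4 \<subseteq> V"
  proof
    fix w :: "complex vec" assume w: "w \<in> carrier_vec 4"
    have "vec4 (w$0 * 1 + w$1 * 0 + (w$2 * 0 + w$3 * 0)) (w$0 * 0 + w$1 * 1 + (w$2 * 0 + w$3 * 0))
       (w$0 * 0 + w$1 * 0 + (w$2 * 1 + w$3 * 0)) (w$0 * 0 + w$1 * 0 + (w$2 * 0 + w$3 * 1)) \<in> V"
      by (intro adv smv u0 u1 u2 u3)
    thus "w \<in> V" using vec4_eta[OF w] by simp
  qed
  thus ?thesis using sub by blast
qed

lemma stepT1: assumes "s \<noteq> 0" shows
 "(1/(2*s)) \<cdot>\<^sub>v (RG (\<lambda>j. if j = 1 then s else if j = 2 then - c else 0) *\<^sub>v vec4 a b x d)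
  + ((c + \<i>*s)/(2*s)) \<cdot>\<^sub>v (RG (\<lambda>j. if j = 2 then 1 else 0) *\<^sub>v vec4 a b x d) = vec4 b 0 d 0"
  unfolding RG_def M4_mult_vec4 vec4_smult vec4_add vec4_eq using assms
  by (simp add: field_simps)

lemma stepB1: assumes "s \<noteq> 0" shows
 "(1/(2*s)) \<cdot>\<^sub>v (RG (\<lambda>j. if j = 1 then s else if j = 2 then - c else 0) *\<^sub>v vec4 a b x d)
  + ((c - \<i>*s)/(2*s)) \<cdot>\<^sub>v (RG (\<lambda>j. if j = 2 then 1 else 0) *\<^sub>v vec4 a b x d) = vec4 0 a 0 x"
  unfolding RG_def M4_mult_vec4 vec4_smult vec4_add vec4_eq using assms
  by (simp add: field_simps)

lemma stepT2: assumes "s \<noteq> 0" shows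
 "(1/(2*s)) \<cdot>\<^sub>v (RG (\<lambda>j. if j = 3 then s else if j = 4 then - c else 0) *\<^sub>v vec4 a b x d)
  + ((c + \<i>*s)/(2*s)) \<cdot>\<^sub>v (RG (\<lambda>j. if j = 4 then 1 else 0) *\<^sub>v vec4 a b x d) = vec4 x (-d) 0 0"
  unfolding RG_def M4_mult_vec4 vec4_smult vec4_add vec4_eq using assms
  by (simp add: field_simps)

lemma stepB2: assumes "s \<noteq> 0" shows
 "(1/(2*s)) \<cdot>\<^sub>v (RG (\<lambda>j. if j = 3 then s else if j = 4 then - c else 0) *\<^sub>v vec4 a b x d)
  + ((c - \<i>*s)/(2*s)) \<cdot>\<^sub>v (RG (\<lambda>j. if j = 4 then 1 else 0) *\<^sub>v vec4 a b x d) = vec4 0 0 a (-b)"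
  unfolding RG_def M4_mult_vec4 vec4_smult vec4_add vec4_eq using assms
  by (simp add: field_simps)

lemma rows_M4: "length L = 4 \<Longrightarrow> mat_of_rows_list 4 L = M4 L"
  by (simp add: mat_of_rows_list_def M4_def)

lemma neg_one_M4: "- 1\<^sub>m 4 = (M4 [[-1,0,0,0],[0,-1,0,0],[0,0,-1,0],[0,0,0,-1]] :: complex mat)"
  by (rule mat_eq4, simp add: uminus_carrier_mat, simp, unfold all4, simp add: scalar_prod_def sum4)

lemma one_M4: "1\<^sub>m 4 = (M4 [[1,0,0,0],[0,1,0,0],[0,0,1,0],[0,0,0,1]] :: complex mat)"
  by (rule mat_eq4, simp, simp, unfold all4, simp add: scalar_prod_def sum4)

definition PP :: "complex mat" where "PP = M4 [[1,0,0,0],[0,-\<i>,0,0],[0,0,-\<i>,0],[0,0,0,-1]]"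
definition QQ :: "complex mat" where "QQ = M4 [[1,0,0,0],[0,\<i>,0,0],[0,0,\<i>,0],[0,0,0,-1]]"

lemma M4_mult_carrier: "M4 A * M4 B \<in> carrier_mat 4 4"
  by (rule mult_carrier_mat[OF M4_carrier M4_carrier])

lemma PP_inv: "invertible_mat PP"
proof -
  have "PP * QQ = 1\<^sub>m 4"
    unfolding one_M4 PP_def QQ_def
    by (rule mat_eq4, rule M4_mult_carrier, simp, unfold all4, simp add: scalar_prod_def sum4)
  moreover have "QQ * PP = 1\<^sub>m 4"
    unfolding one_M4 PP_def QQ_def
    by (rule mat_eq4, rule M4_mult_carrier, simp, unfold all4, simp add: scalar_prod_def sum4)
  ultimately show ?thesis
    unfolding invertible_mat_def inverts_mat_def square_mat.simps
    by (auto simp: PP_def QQ_def)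
qed

theorem proposition2p2:
  fixes m1 m2 :: nat
  assumes "m1 \<ge> 2" and "m2 \<ge> 2"
  shows "cz \<in> Wt m1 m2
    \<and> rhoS cz = - 1\<^sub>m 4
    \<and> irreducible_on (rhoS ` Wt m1 m2)
    \<and> (\<exists>P \<in> carrier_mat 4 4. invertible_mat P
         \<and> P * rhoS (tf1 m1) = U_f1 * P
         \<and> P * rhoS (tf2 m2) = U_f2 * P
         \<and> P * rhoS (tr1 m1) = U_r1 m1 * P
         \<and> P * rhoS (tr2 m2) = U_r2 m2 * P
         \<and> P * rhoS cz = U_z * P)"
proof -
  have m1: "m1 > 0" and m2: "m2 > 0" using assms by auto
  have s1: "sn m1 \<noteq> 0" and s2: "sn m2 \<noteq> 0" using assms sn_nz by auto
  have Ma1: "rhoS (gamma (alpha m1 m1)) \<in> rhoS ` Wt m1 m2"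
    using m1 by (intro imageI gamma_Wt alpha_Wgens) auto
  have Mb1: "rhoS (gamma (alpha m1 1)) \<in> rhoS ` Wt m1 m2"
    using m1 by (intro imageI gamma_Wt alpha_Wgens) auto
  have Ma2: "rhoS (gamma (beta m2 m2)) \<in> rhoS ` Wt m1 m2"
    using m2 by (intro imageI gamma_Wt beta_Wgens) auto
  have Mb2: "rhoS (gamma (beta m2 1)) \<in> rhoS ` Wt m1 m2"
    using m2 by (intro imageI gamma_Wt beta_Wgens) auto
  have irr: "irreducible_on (rhoS ` Wt m1 m2)"
    unfolding irreducible_on_def
  proof (intro allI impI)
    fix V assume H: "V \<subseteq> carrier_vec 4 \<and> 0\<^sub>v 4 \<in> V \<and> (\<forall>v\<in>V. \<forall>w\<in>V. v + w \<in> V) \<and>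
       (\<forall>c. \<forall>v\<in>V. c \<cdot>\<^sub>v v \<in> V) \<and> (\<forall>M\<in>rhoS ` Wt m1 m2. \<forall>v\<in>V. M *\<^sub>v v \<in> V)"
    hence sub: "V \<subseteq> carrier_vec 4" and z: "0\<^sub>v 4 \<in> V"
      and ad: "\<forall>v\<in>V. \<forall>w\<in>V. v + w \<in> V" and sm: "\<forall>c. \<forall>v\<in>V. c \<cdot>\<^sub>v v \<in> V"
      and inv: "\<forall>M\<in>rhoS ` Wt m1 m2. \<forall>v\<in>V. M *\<^sub>v v \<in> V" by auto
    have a1: "RG (\<lambda>j. if j = 2 then 1 else 0) *\<^sub>v v \<in> V" if "v \<in> V" for v
      using bspec[OF bspec[OF inv Ma1] that] by (simp only: rhoS_gamma alpha_m[OF m1])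
    have b1: "RG (\<lambda>j. if j = 1 then sn m1 else if j = 2 then - cs m1 else 0) *\<^sub>v v \<in> V" if "v \<in> V" for v
      using bspec[OF bspec[OF inv Mb1] that] by (simp only: rhoS_gamma alpha_1)
    have a2: "RG (\<lambda>j. if j = 4 then 1 else 0) *\<^sub>v v \<in> V" if "v \<in> V" for v
      using bspec[OF bspec[OF inv Ma2] that] by (simp only: rhoS_gamma beta_m[OF m2])
    have b2: "RG (\<lambda>j. if j = 3 then sn m2 else if j = 4 then - cs m2 else 0) *\<^sub>v v \<in> V" if "v \<in> V" for v
      using bspec[OF bspec[OF inv Mb2] that] by (simp only: rhoS_gamma beta_1)
    have comb: "k1 \<cdot>\<^sub>v u + k2 \<cdot>\<^sub>v w \<in> V" if "u \<in> V" "w \<in> V" for k1 k2 u w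
      using ad sm that by blast
    show "V = {0\<^sub>v 4} \<or> V = carrier_vec 4"
    proof (rule irr_core[OF sub z ad sm])
      fix a b c d assume v: "vec4 a b c d \<in> V"
      show "vec4 b 0 d 0 \<in> V" using comb[OF b1[OF v] a1[OF v], of "1/(2*sn m1)" "(cs m1 + \<i>*sn m1)/(2*sn m1)"]
        unfolding stepT1[OF s1] .
      show "vec4 0 a 0 c \<in> V" using comb[OF b1[OF v] a1[OF v], of "1/(2*sn m1)" "(cs m1 - \<i>*sn m1)/(2*sn m1)"]
        unfolding stepB1[OF s1] .
      show "vec4 c (-d) 0 0 \<in> V" using comb[OF b2[OF v] a2[OF v], of "1/(2*sn m2)" "(cs m2 + \<i>*sn m2)/(2*sn m2)"]
        unfolding stepT2[OF s2] .
      show "vec4 0 0 a (-b) \<in> V" using comb[OF b2[OF v] a2[OF v], of "1/(2*sn m2)" "(cs m2 - \<i>*sn m2)/(2*sn m2)"]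
        unfolding stepB2[OF s2] .
    qed
  qed
  have f1: "PP * rhoS (tf1 m1) = U_f1 * PP"
    unfolding tf1_def rhoS_gamma alpha_m[OF m1] U_f1_def rows_M4[of "[[0,1,0,0],[1,0,0,0],[0,0,0,1],[0,0,1,0]]", simplified]
      PP_def RG_def
    by (rule mat_eq4, rule M4_mult_carrier, rule M4_mult_carrier, unfold all4, simp add: scalar_prod_def sum4)
  have f2: "PP * rhoS (tf2 m2) = U_f2 * PP"
    unfolding tf2_def rhoS_gamma beta_m[OF m2] U_f2_def rows_M4[of "[[0,0,1,0],[0,0,0,-1],[1,0,0,0],[0,-1,0,0]]", simplified]
      PP_def RG_def
    by (rule mat_eq4, rule M4_mult_carrier, rule M4_mult_carrier, unfold all4, simp add: scalar_prod_def sum4)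
  have r1: "PP * rhoS (tr1 m1) = U_r1 m1 * PP"
    unfolding rhoS_tr1[OF m1] U_r1_def rows_M4[of "[[zeta m1,0,0,0],[0,inverse (zeta m1),0,0],
                                  [0,0,zeta m1,0],[0,0,0,inverse (zeta m1)]]", simplified]
      PP_def R1_def unfolding zeta_inv unfolding zeta_eq
    by (rule mat_eq4, rule M4_mult_carrier, rule M4_mult_carrier, unfold all4, simp add: scalar_prod_def sum4)
  have r2: "PP * rhoS (tr2 m2) = U_r2 m2 * PP"
    unfolding rhoS_tr2[OF m2] U_r2_def rows_M4[of "[[zeta m2,0,0,0],[0,zeta m2,0,0],
                                  [0,0,inverse (zeta m2),0],[0,0,0,inverse (zeta m2)]]", simplified]
      PP_def R2_def unfolding zeta_inv unfolding zeta_eq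
    by (rule mat_eq4, rule M4_mult_carrier, rule M4_mult_carrier, unfold all4, simp add: scalar_prod_def sum4)
  have zz: "PP * rhoS cz = U_z * PP"
    unfolding rhoS_cz U_z_def neg_one_M4 PP_def
    by (rule mat_eq4, rule M4_mult_carrier, rule M4_mult_carrier, unfold all4, simp add: scalar_prod_def sum4)
  show ?thesis
    using cz_Wt[OF m1] rhoS_cz irr PP_inv f1 f2 r1 r2 zz
    by (intro conjI bexI[of _ PP]) (auto simp: PP_def)
qed
end
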